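(* Let $X$ be a gamble and $\varepsilon>0$. (a) Let $\underline{P}$ be defined on $\mathcal{D}_0^{\le}(X)=\{I_{(X\le-\varepsilon)}, -X^2\}$, and let $\mathcal{M}_0^{\le}(X)$ be the set of dF-coherent previsions $P$ on $\mathcal{D}_0^{\le}(X)\cup\{X\}$ with $P\ge\underline{P}$ on $\mathcal{D}_0^{\le}(X)$ and $P(X)=0$. If $\mathcal{M}_0^{\le}(X)\neq\emptyset$, then $\underline{P}(X\le-\varepsilon)\le\frac{\overline{P}(X^2)}{\overline{P}(X^2)+\varepsilon^2}$. (b) Let $\underline{P}$ be defined on $\mathcal{D}_0^{\ge}(X)=\{I_{(X\ge\varepsilon)}, -X^2\}$, and let $\mathcal{M}_0^{\ge}(X)$ be the set of dF-coherent previsions $P$ on $\mathcal{D}_0^{\ge}(X)\cup\{X\}$ with $P\ge\underline{P}$ on $\mathcal{D}_0^{\ge}(X)$ and $P(X)=0$. If $\mathcal{M}_0^{\ge}(X)\neq\emptyset$, then $\underline{P}(X\ge\varepsilon)\le\frac{\overline{P}(X^2)}{\overline{P}(X^2)+\varepsilon^2}$. Here $\overline{P}(X^2)=-\underline{P}(-X^2)$.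
   Context: $\Pi$ is a partition of the sure event into pairwise disjoint non-impossible events; a gamble is a bounded map $X:\Pi\to\mathbb{R}$; $(X\le c)$, $(X\ge c)$ are events with indicators $I_{(X\le c)}$, $I_{(X\ge c)}$, and $\underline{P}(X\le c)=\underline{P}(I_{(X\le c)})$. A lower prevision is just a real-valued map on a set of gambles; no consistency is assumed beyond the stated hypothesis. A map $P:\mathcal{D}\to\mathbb{R}$ is a dF-coherent prevision iff for all $n\in\mathbb{N}$, $s_0,\dots,s_n\in\mathbb{R}$, $X_0,\dots,X_n\in\mathcal{D}$, $\sup\sum_{i=0}^n s_i(X_i-P(X_i))\ge 0$. *)

theory Defs
  imports "HOL-Analysis.Analysis"
begin

text \<open>The partition \<open>\<Pi>\<close> is modelled by a type \<open>'w\<close> (its elements are the atoms,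
  automatically nonempty). A gamble is a bounded real map on \<open>\<Pi>\<close>.\<close>

definition gamble :: "('w \<Rightarrow> real) \<Rightarrow> bool" where
  "gamble X \<longleftrightarrow> (\<exists>B. \<forall>w. \<bar>X w\<bar> \<le> B)"

definition dF_coherent :: "(('w \<Rightarrow> real) \<Rightarrow> real) \<Rightarrow> ('w \<Rightarrow> real) set \<Rightarrow> bool" where
  "dF_coherent P D \<longleftrightarrow>
     (\<forall>(n::nat) (s::nat \<Rightarrow> real) (Xs::nat \<Rightarrow> 'w \<Rightarrow> real).
        (\<forall>i\<le>n. Xs i \<in> D) \<longrightarrow>
        (SUP w. \<Sum>i\<le>n. s i * (Xs i w - P (Xs i))) \<ge> 0)"

definition D0_le :: "('w \<Rightarrow> real) \<Rightarrow> real \<Rightarrow> ('w \<Rightarrow> real) set" where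
  "D0_le X eps = {indicator {w. X w \<le> - eps}, (\<lambda>w. - ((X w)^2))}"

definition D0_ge :: "('w \<Rightarrow> real) \<Rightarrow> real \<Rightarrow> ('w \<Rightarrow> real) set" where
  "D0_ge X eps = {indicator {w. X w \<ge> eps}, (\<lambda>w. - ((X w)^2))}"

definition M0 :: "('w \<Rightarrow> real) set \<Rightarrow> (('w \<Rightarrow> real) \<Rightarrow> real) \<Rightarrow> ('w \<Rightarrow> real)
                  \<Rightarrow> (('w \<Rightarrow> real) \<Rightarrow> real) set" where
  "M0 D LP X = {P. dF_coherent P (D \<union> {X}) \<and> (\<forall>Y\<in>D. P Y \<ge> LP Y) \<and> P X = 0}"

definition upper_sq :: "(('w \<Rightarrow> real) \<Rightarrow> real) \<Rightarrow> ('w \<Rightarrow> real) \<Rightarrow> real" where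
  "upper_sq LP X = - LP (\<lambda>w. - ((X w)^2))"

end

theory Submission
  imports Defs
begin

lemma coh_three:
  fixes P :: "('w \<Rightarrow> real) \<Rightarrow> real"
  assumes coh: "dF_coherent P D" and A: "A \<in> D" and B: "B \<in> D" and C: "C \<in> D"
    and bd: "\<And>w. a * A w + b * B w + c * C w \<le> K"
  shows "0 \<le> K - a * P A - b * P B - c * P C"
proof -
  define s :: "nat \<Rightarrow> real" where "s = (\<lambda>i. if i = 0 then a else if i = 1 then b else c)"
  define Xs where "Xs = (\<lambda>i::nat. if i = 0 then A else if i = 1 then B else C)"
  have "\<forall>i\<le>2. Xs i \<in> D" using A B C by (auto simp: Xs_def)
  with coh have "(SUP w. \<Sum>i\<le>2. s i * (Xs i w - P (Xs i))) \<ge> 0"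
    unfolding dF_coherent_def by blast
  moreover have eq: "(\<Sum>i\<le>2. s i * (Xs i w - P (Xs i))) =
      a * A w + b * B w + c * C w - (a * P A + b * P B + c * P C)" for w
    by (simp add: s_def Xs_def numeral_2_eq_2 atMost_Suc algebra_simps)
  moreover have "(SUP w. \<Sum>i\<le>2. s i * (Xs i w - P (Xs i))) \<le> K - (a * P A + b * P B + c * P C)"
    unfolding eq by (rule cSUP_least) (use bd in \<open>auto simp: add.assoc\<close>)
  ultimately show ?thesis by linarith
qed

lemma coh_one:
  fixes P :: "('w \<Rightarrow> real) \<Rightarrow> real"
  assumes coh: "dF_coherent P D" and A: "A \<in> D"
    and bd: "\<And>w. A w \<le> K"
  shows "0 \<le> K - P A"
  using coh_three[OF coh A A A, of 1 0 0 K] bd by simp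

lemma final_ineq:
  fixes a p q u eps :: real
  assumes "eps > 0" "q \<ge> 0" "q \<le> u" "a \<le> p"
    and h: "(q/eps + eps)^2 * p \<le> (q/eps)^2 + q"
  shows "a \<le> u / (u + eps^2)"
proof -
  have e: "(q/eps + eps)^2 = (q + eps^2)^2 / eps^2"
    using assms(1) by (simp add: field_simps power2_eq_square)
  have e2: "(q/eps)^2 + q = q * (q + eps^2) / eps^2"
    using assms(1) by (simp add: field_simps power2_eq_square)
  have pos: "q + eps^2 > 0" using assms by (simp add: add_nonneg_pos)
  from h have "(q + eps^2)^2 * p \<le> q * (q + eps^2)"
    unfolding e e2 using assms(1) by (simp add: field_simps)
  hence "(q + eps^2) * ((q + eps^2) * p) \<le> (q + eps^2) * q"
    by (simp add: power2_eq_square algebra_simps)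
  hence "(q + eps^2) * p \<le> q" using pos by simp
  hence p: "p \<le> q / (q + eps^2)" using pos by (simp add: field_simps)
  have "q / (q + eps^2) \<le> u / (u + eps^2)"
  proof -
    have "q * (u + eps^2) \<le> u * (q + eps^2)"
      using assms by (simp add: algebra_simps mult_right_mono)
    moreover have "u + eps^2 > 0" using assms by (simp add: add_nonneg_pos)
    ultimately show ?thesis using pos by (simp add: divide_simps)
  qed
  with p assms(4) show ?thesis by linarith
qed

theorem proposition4:
  fixes X :: "'w \<Rightarrow> real" and eps :: real
    and LPa LPb :: "('w \<Rightarrow> real) \<Rightarrow> real"
  assumes "gamble X" and "eps > 0"
  shows "(M0 (D0_le X eps) LPa X \<noteq> {} \<longrightarrow>
           LPa (indicator {w. X w \<le> - eps}) \<le> upper_sq LPa X / (upper_sq LPa X + eps^2))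
       \<and> (M0 (D0_ge X eps) LPb X \<noteq> {} \<longrightarrow>
           LPb (indicator {w. X w \<ge> eps}) \<le> upper_sq LPb X / (upper_sq LPb X + eps^2))"
proof (intro conjI impI)
  let ?N = "(\<lambda>w. - ((X w)^2))"
  have epos: "eps > 0" by fact
  {
    assume "M0 (D0_le X eps) LPa X \<noteq> {}"
    then obtain P where coh: "dF_coherent P (D0_le X eps \<union> {X})"
      and dom: "\<forall>Y\<in>D0_le X eps. P Y \<ge> LPa Y" and PX: "P X = 0"
      unfolding M0_def by blast
    let ?I = "indicator {w. X w \<le> - eps} :: 'w \<Rightarrow> real"
    have I: "?I \<in> D0_le X eps \<union> {X}" and N: "?N \<in> D0_le X eps \<union> {X}"
      and XX: "X \<in> D0_le X eps \<union> {X}" by (auto simp: D0_le_def)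
    define q where "q = - P ?N"
    have q0: "q \<ge> 0" using coh_one[OF coh N, of 0] by (simp add: q_def)
    define t where "t = q / eps"
    have t0: "t \<ge> 0" using q0 epos by (simp add: t_def)
    have "0 \<le> t^2 - (t+eps)^2 * P ?I - 1 * P ?N - (2*t) * P X"
    proof (rule coh_three[OF coh I N XX])
      fix w
      show "(t+eps)^2 * ?I w + 1 * ?N w + (2*t) * X w \<le> t^2"
      proof (cases "X w \<le> - eps")
        case True
        have "(t+eps)^2 \<le> (t - X w)^2"
          using True t0 epos by (intro power_mono) auto
        then show ?thesis using True by (simp add: power2_eq_square algebra_simps)
      next
        case False
        have "0 \<le> (t - X w)^2" by simp
        then show ?thesis using False by (simp add: power2_eq_square algebra_simps)
      qed
    qed
    hence h: "(t+eps)^2 * P ?I \<le> t^2 + q" using PX by (simp add: q_def)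
    have "q \<le> upper_sq LPa X" using dom by (auto simp: upper_sq_def q_def D0_le_def)
    moreover have "LPa ?I \<le> P ?I" using dom by (auto simp: D0_le_def)
    ultimately show "LPa ?I \<le> upper_sq LPa X / (upper_sq LPa X + eps^2)"
      using final_ineq[OF epos q0] h by (simp add: t_def)
  }
  {
    assume "M0 (D0_ge X eps) LPb X \<noteq> {}"
    then obtain P where coh: "dF_coherent P (D0_ge X eps \<union> {X})"
      and dom: "\<forall>Y\<in>D0_ge X eps. P Y \<ge> LPb Y" and PX: "P X = 0"
      unfolding M0_def by blast
    let ?I = "indicator {w. X w \<ge> eps} :: 'w \<Rightarrow> real"
    have I: "?I \<in> D0_ge X eps \<union> {X}" and N: "?N \<in> D0_ge X eps \<union> {X}"
      and XX: "X \<in> D0_ge X eps \<union> {X}" by (auto simp: D0_ge_def)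
    define q where "q = - P ?N"
    have q0: "q \<ge> 0" using coh_one[OF coh N, of 0] by (simp add: q_def)
    define t where "t = q / eps"
    have t0: "t \<ge> 0" using q0 epos by (simp add: t_def)
    have "0 \<le> t^2 - (t+eps)^2 * P ?I - 1 * P ?N - (-2*t) * P X"
    proof (rule coh_three[OF coh I N XX])
      fix w
      show "(t+eps)^2 * ?I w + 1 * ?N w + (-2*t) * X w \<le> t^2"
      proof (cases "X w \<ge> eps")
        case True
        have "(t+eps)^2 \<le> (t + X w)^2"
          using True t0 epos by (intro power_mono) auto
        then show ?thesis using True by (simp add: power2_eq_square algebra_simps)
      next
        case False
        have "0 \<le> (t + X w)^2" by simp
        then show ?thesis using False by (simp add: power2_eq_square algebra_simps)
      qed
    qed
    hence h: "(t+eps)^2 * P ?I \<le> t^2 + q" using PX by (simp add: q_def)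
    have "q \<le> upper_sq LPb X" using dom by (auto simp: upper_sq_def q_def D0_ge_def)
    moreover have "LPb ?I \<le> P ?I" using dom by (auto simp: D0_ge_def)
    ultimately show "LPb ?I \<le> upper_sq LPb X / (upper_sq LPb X + eps^2)"
      using final_ineq[OF epos q0] h by (simp add: t_def)
  }
qed

end
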